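(* Let $P$ be a poset, let $\Gamma$ and $\Gamma'$ be standard closure operators on $P$ with $\Gamma'\le\Gamma$, let $L_\Gamma$ and $L_{\Gamma'}$ be the complete lattices of $\Gamma$-closed and $\Gamma'$-closed subsets of $P$ (ordered by inclusion), and let $\eta:P\to L_\Gamma$, $\eta':P\to L_{\Gamma'}$ be the maps $p\mapsto p^\downarrow$. Then there is a unique completely join-preserving map $\phi:L_{\Gamma'}\to L_\Gamma$ with $\phi\circ\eta'=\eta$. Moreover, $L_\Gamma$ is a frame if and only if, for every standard closure operator $\Gamma'\le\Gamma$, the corresponding map $\phi$ preserves finite meets.
   Context: A closure operator on $P$ is a map $\Gamma:\wp(P)\to\wp(P)$ that is extensive, monotone and idempotent; it is standard if $\Gamma(\{p\})=p^\downarrow=\{q\in P:q\le p\}$ for all $p\in P$. A set $S$ is $\Gamma$-closed if $\Gamma(S)=S$. $\Gamma'\le\Gamma$ means $\Gamma'(S)\subseteq\Gamma(S)$ for all $S\subseteq P$. A frame is a complete lattice with $x\wedge\bigvee Y=\bigvee_{y\in Y}(x\wedge y)$. *)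

theory Defs
  imports Main
begin

definition closure_operator :: "('a set \<Rightarrow> 'a set) \<Rightarrow> bool" where
  "closure_operator \<Gamma> \<longleftrightarrow>
     (\<forall>S. S \<subseteq> \<Gamma> S) \<and> (\<forall>S T. S \<subseteq> T \<longrightarrow> \<Gamma> S \<subseteq> \<Gamma> T) \<and> (\<forall>S. \<Gamma> (\<Gamma> S) = \<Gamma> S)"

definition down :: "'a::order \<Rightarrow> 'a set" where
  "down p = {q. q \<le> p}"

definition standard_closure :: "('a::order set \<Rightarrow> 'a set) \<Rightarrow> bool" where
  "standard_closure \<Gamma> \<longleftrightarrow> closure_operator \<Gamma> \<and> (\<forall>p. \<Gamma> {p} = down p)"

definition closed_sets :: "('a set \<Rightarrow> 'a set) \<Rightarrow> 'a set set" where
  "closed_sets \<Gamma> = {S. \<Gamma> S = S}"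

definition is_lub :: "'a set set \<Rightarrow> 'a set set \<Rightarrow> 'a set \<Rightarrow> bool" where
  "is_lub L Y x \<longleftrightarrow> x \<in> L \<and> (\<forall>y\<in>Y. y \<subseteq> x) \<and> (\<forall>z\<in>L. (\<forall>y\<in>Y. y \<subseteq> z) \<longrightarrow> x \<subseteq> z)"

definition is_glb :: "'a set set \<Rightarrow> 'a set set \<Rightarrow> 'a set \<Rightarrow> bool" where
  "is_glb L Y x \<longleftrightarrow> x \<in> L \<and> (\<forall>y\<in>Y. x \<subseteq> y) \<and> (\<forall>z\<in>L. (\<forall>y\<in>Y. z \<subseteq> y) \<longrightarrow> z \<subseteq> x)"

definition lub :: "'a set set \<Rightarrow> 'a set set \<Rightarrow> 'a set" where
  "lub L Y = (THE x. is_lub L Y x)"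

definition glb :: "'a set set \<Rightarrow> 'a set set \<Rightarrow> 'a set" where
  "glb L Y = (THE x. is_glb L Y x)"

definition is_frame :: "'a set set \<Rightarrow> bool" where
  "is_frame L \<longleftrightarrow>
     (\<forall>Y\<subseteq>L. \<exists>x. is_lub L Y x) \<and> (\<forall>Y\<subseteq>L. \<exists>x. is_glb L Y x) \<and>
     (\<forall>x\<in>L. \<forall>Y\<subseteq>L. glb L {x, lub L Y} = lub L ((\<lambda>y. glb L {x, y}) ` Y))"

definition complete_join_hom :: "'a set set \<Rightarrow> 'b set set \<Rightarrow> ('a set \<Rightarrow> 'b set) \<Rightarrow> bool" where
  "complete_join_hom L1 L2 \<phi> \<longleftrightarrow>
     (\<forall>S\<in>L1. \<phi> S \<in> L2) \<and>
     (\<forall>Y\<subseteq>L1. \<forall>x. is_lub L1 Y x \<longrightarrow> is_lub L2 (\<phi> ` Y) (\<phi> x))"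

text \<open>\<phi> : L1 \<rightarrow> L2 preserves finite meets (including the empty meet, i.e. top).\<close>

definition finite_meet_preserving :: "'a set set \<Rightarrow> 'b set set \<Rightarrow> ('a set \<Rightarrow> 'b set) \<Rightarrow> bool" where
  "finite_meet_preserving L1 L2 \<phi> \<longleftrightarrow>
     (\<forall>Y\<subseteq>L1. finite Y \<longrightarrow> (\<forall>x. is_glb L1 Y x \<longrightarrow> is_glb L2 (\<phi> ` Y) (\<phi> x)))"

end

theory Submission
  imports Defs
begin

definition dset :: "'a::order set \<Rightarrow> bool" where
  "dset S \<longleftrightarrow> (\<forall>p\<in>S. \<forall>q. q \<le> p \<longrightarrow> q \<in> S)"

lemma co_ext: "closure_operator G \<Longrightarrow> S \<subseteq> G S"
  by (simp add: closure_operator_def)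
lemma co_mono: "closure_operator G \<Longrightarrow> S \<subseteq> T \<Longrightarrow> G S \<subseteq> G T"
  by (simp add: closure_operator_def)
lemma co_idem: "closure_operator G \<Longrightarrow> G (G S) = G S"
  by (simp add: closure_operator_def)

lemma closed_Inter:
  assumes "closure_operator G" "Y \<subseteq> closed_sets G"
  shows "\<Inter>Y \<in> closed_sets G"
proof -
  have "G (\<Inter>Y) \<subseteq> \<Inter>Y"
  proof
    fix x assume x: "x \<in> G (\<Inter>Y)"
    show "x \<in> \<Inter>Y"
    proof
      fix y assume "y \<in> Y"
      then have "G (\<Inter>Y) \<subseteq> G y" using co_mono[OF assms(1)] by (meson Inter_lower)
      moreover have "G y = y" using \<open>y \<in> Y\<close> assms(2) by (auto simp: closed_sets_def)
      ultimately show "x \<in> y" using x by auto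
    qed
  qed
  then show ?thesis using co_ext[OF assms(1)] by (auto simp: closed_sets_def)
qed

lemma glb_iff:
  assumes "closure_operator G" "Y \<subseteq> closed_sets G"
  shows "is_glb (closed_sets G) Y x \<longleftrightarrow> x = \<Inter>Y"
  using closed_Inter[OF assms] unfolding is_glb_def
  by (metis Inter_greatest Inter_lower subset_antisym)

lemma closed_G: "closure_operator G \<Longrightarrow> G S \<in> closed_sets G"
  by (simp add: closed_sets_def co_idem)

lemma lub_iff:
  assumes "closure_operator G"
  shows "is_lub (closed_sets G) Y x \<longleftrightarrow> x = G (\<Union>Y)"
proof
  assume h: "is_lub (closed_sets G) Y x"
  then have "x \<subseteq> G (\<Union>Y)" unfolding is_lub_def
    using closed_G[OF assms] co_ext[OF assms] by (meson Union_subsetI subset_trans Union_upper)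
  moreover have "G (\<Union>Y) \<subseteq> x"
  proof -
    have "\<Union>Y \<subseteq> x" using h unfolding is_lub_def by auto
    then have "G (\<Union>Y) \<subseteq> G x" using co_mono[OF assms] by auto
    also have "G x = x" using h unfolding is_lub_def closed_sets_def by auto
    finally show ?thesis .
  qed
  ultimately show "x = G (\<Union>Y)" by auto
next
  assume "x = G (\<Union>Y)"
  have "\<forall>y\<in>Y. y \<subseteq> G (\<Union>Y)" using co_ext[OF assms] by blast
  moreover have "G (\<Union>Y) \<subseteq> z" if "z \<in> closed_sets G" "\<forall>y\<in>Y. y \<subseteq> z" for z
  proof -
    have "G (\<Union>Y) \<subseteq> G z" using that(2) co_mono[OF assms] by (simp add: Sup_least)
    then show ?thesis using that(1) by (simp add: closed_sets_def)
  qed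
  ultimately show "is_lub (closed_sets G) Y x" unfolding is_lub_def
    using closed_G[OF assms] \<open>x = G (\<Union>Y)\<close> by blast
qed

lemma glb_eq:
  assumes "closure_operator G" "Y \<subseteq> closed_sets G"
  shows "glb (closed_sets G) Y = \<Inter>Y"
  unfolding glb_def using glb_iff[OF assms] by (intro the_equality) auto

lemma lub_eq:
  assumes "closure_operator G"
  shows "lub (closed_sets G) Y = G (\<Union>Y)"
  unfolding lub_def using lub_iff[OF assms] by (intro the_equality) auto

lemma std_co: "standard_closure G \<Longrightarrow> closure_operator G"
  by (simp add: standard_closure_def)

lemma closed_dset:
  assumes "standard_closure G" "S \<in> closed_sets G"
  shows "dset S"
  unfolding dset_def
proof (intro ballI allI impI)
  fix p q assume "p \<in> S" "q \<le> p"
  have "G {p} \<subseteq> G S" using co_mono[OF std_co[OF assms(1)]] \<open>p \<in> S\<close> by auto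
  moreover have "G {p} = down p" using assms(1) by (simp add: standard_closure_def)
  moreover have "G S = S" using assms(2) by (simp add: closed_sets_def)
  ultimately show "q \<in> S" using \<open>q \<le> p\<close> by (auto simp: down_def)
qed

lemma down_closed:
  assumes "standard_closure G"
  shows "down p \<in> closed_sets G"
  using assms by (metis closed_G standard_closure_def)

lemma dset_Union: "dset S \<Longrightarrow> S = \<Union>(down ` S)"
  by (auto simp: dset_def down_def)

lemma G_down: "standard_closure G \<Longrightarrow> G (down p) = down p"
  using down_closed by (auto simp: closed_sets_def)

lemma join_hom_G:
  assumes "closure_operator G" "closure_operator G'" "\<forall>S. G' S \<subseteq> G S"
  shows "complete_join_hom (closed_sets G') (closed_sets G) G"
  unfolding complete_join_hom_def
proof (intro conjI ballI allI impI)
  fix S show "G S \<in> closed_sets G" by (rule closed_G[OF assms(1)])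
next
  fix Y x assume "Y \<subseteq> closed_sets G'" "is_lub (closed_sets G') Y x"
  then have x: "x = G' (\<Union>Y)" using lub_iff[OF assms(2)] by auto
  have "G x = G (\<Union>Y)"
  proof
    have "G x \<subseteq> G (G (\<Union>Y))" using x assms(3) co_mono[OF assms(1)] by auto
    then show "G x \<subseteq> G (\<Union>Y)" using co_idem[OF assms(1)] by auto
    show "G (\<Union>Y) \<subseteq> G x" using x co_ext[OF assms(2)] co_mono[OF assms(1)] by auto
  qed
  moreover have "G (\<Union>(G ` Y)) = G (\<Union>Y)"
  proof
    have "\<Union>(G ` Y) \<subseteq> G (\<Union>Y)" using co_mono[OF assms(1)] by (meson UN_least Union_upper)
    then have "G (\<Union>(G ` Y)) \<subseteq> G (G (\<Union>Y))" using co_mono[OF assms(1)] by auto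
    then show "G (\<Union>(G ` Y)) \<subseteq> G (\<Union>Y)" using co_idem[OF assms(1)] by auto
    have "\<Union>Y \<subseteq> \<Union>(G ` Y)" using co_ext[OF assms(1)] by blast
    then show "G (\<Union>Y) \<subseteq> G (\<Union>(G ` Y))" using co_mono[OF assms(1)] by auto
  qed
  ultimately show "is_lub (closed_sets G) (G ` Y) (G x)" using lub_iff[OF assms(1)] by auto
qed

lemma unique_hom:
  assumes "standard_closure G" "standard_closure G'"
    and "complete_join_hom (closed_sets G') (closed_sets G) \<psi>" "\<forall>p. \<psi> (down p) = down p"
    and S: "S \<in> closed_sets G'"
  shows "\<psi> S = G S"
proof -
  have co: "closure_operator G" "closure_operator G'" using assms std_co by auto
  have ds: "S = \<Union>(down ` S)" using dset_Union closed_dset[OF assms(2) S] by auto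
  have sub: "down ` S \<subseteq> closed_sets G'" using down_closed[OF assms(2)] by auto
  have "G' (\<Union>(down ` S)) = S" using ds S by (simp add: closed_sets_def)
  then have "is_lub (closed_sets G') (down ` S) S" using lub_iff[OF co(2)] by auto
  then have "is_lub (closed_sets G) (\<psi> ` down ` S) (\<psi> S)"
    using assms(3) sub unfolding complete_join_hom_def by blast
  moreover have "\<psi> ` down ` S = down ` S" using assms(4) by (auto simp: image_iff)
  ultimately have "\<psi> S = G (\<Union>(down ` S))" using lub_iff[OF co(1)] by auto
  then show ?thesis using ds by simp
qed

lemma frame_law:
  assumes "closure_operator G" "is_frame (closed_sets G)" "x \<in> closed_sets G" "Y \<subseteq> closed_sets G"
  shows "x \<inter> G (\<Union>Y) = G (\<Union>y\<in>Y. x \<inter> y)"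
proof -
  have "glb (closed_sets G) {x, lub (closed_sets G) Y} =
        lub (closed_sets G) ((\<lambda>y. glb (closed_sets G) {x, y}) ` Y)"
    using assms(2-4) unfolding is_frame_def by blast
  moreover have "lub (closed_sets G) Y = G (\<Union>Y)" using lub_eq[OF assms(1)] .
  moreover have "glb (closed_sets G) {x, G (\<Union>Y)} = x \<inter> G (\<Union>Y)"
    using glb_eq[OF assms(1)] closed_G[OF assms(1)] assms(3) by auto
  moreover have "\<And>y. y \<in> Y \<Longrightarrow> glb (closed_sets G) {x, y} = x \<inter> y"
    using glb_eq[OF assms(1)] assms(3,4) by auto
  then have "(\<lambda>y. glb (closed_sets G) {x, y}) ` Y = (\<lambda>y. x \<inter> y) ` Y" by auto
  ultimately show ?thesis using lub_eq[OF assms(1)] by simp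
qed

lemma frame_meet:
  assumes "standard_closure G" "is_frame (closed_sets G)" "dset A" "dset B"
  shows "G (A \<inter> B) = G A \<inter> G B"
proof
  have co: "closure_operator G" using std_co[OF assms(1)] .
  show "G (A \<inter> B) \<subseteq> G A \<inter> G B" using co_mono[OF co] by auto
  have dA: "down ` A \<subseteq> closed_sets G" "down ` B \<subseteq> closed_sets G"
    using down_closed[OF assms(1)] by auto
  have "G A \<inter> G B = G (\<Union>q\<in>B. G A \<inter> down q)"
    using frame_law[OF co assms(2) closed_G[OF co] dA(2)] dset_Union[OF assms(4)]
    by simp
  also have "\<dots> \<subseteq> G (G (A \<inter> B))"
  proof (rule co_mono[OF co], rule UN_least)
    fix q assume q: "q \<in> B"
    have dq: "down q \<in> closed_sets G" using down_closed[OF assms(1)] .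
    have "down q \<inter> G A = G (\<Union>p\<in>A. down q \<inter> down p)"
      using frame_law[OF co assms(2) dq dA(1)] dset_Union[OF assms(3)] by simp
    also have "\<dots> \<subseteq> G (A \<inter> B)"
    proof (rule co_mono[OF co], rule UN_least)
      fix p assume "p \<in> A"
      then show "down q \<inter> down p \<subseteq> A \<inter> B" using q assms(3,4)
        by (auto simp: dset_def down_def)
    qed
    finally show "G A \<inter> down q \<subseteq> G (A \<inter> B)" by blast
  qed
  also have "\<dots> = G (A \<inter> B)" using co_idem[OF co] .
  finally show "G A \<inter> G B \<subseteq> G (A \<inter> B)" .
qed

lemma frame_Inter:
  assumes "standard_closure G" "is_frame (closed_sets G)" "finite Y" "\<forall>A\<in>Y. dset A"
  shows "G (\<Inter>Y) = \<Inter>(G ` Y)"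
  using assms(3,4)
proof (induction Y rule: finite_induct)
  case empty
  have "UNIV \<subseteq> G UNIV" using co_ext[OF std_co[OF assms(1)]] .
  then show ?case by auto
next
  case (insert A Y)
  have "dset (\<Inter>Y)" using insert.prems by (auto simp: dset_def)
  then have "G (A \<inter> \<Inter>Y) = G A \<inter> G (\<Inter>Y)"
    using frame_meet[OF assms(1,2)] insert.prems by auto
  then show ?case using insert by simp
qed

definition dcl :: "'a::order set \<Rightarrow> 'a set" where
  "dcl S = {q. \<exists>p\<in>S. q \<le> p}"

lemma dcl_std: "standard_closure dcl"
  unfolding standard_closure_def closure_operator_def dcl_def down_def
  by (auto intro: order_trans)

lemma dcl_le:
  assumes "standard_closure G"
  shows "dcl S \<subseteq> G S"
proof
  fix q assume "q \<in> dcl S"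
  then obtain p where "p \<in> S" "q \<le> p" by (auto simp: dcl_def)
  then have "q \<in> G {p}" using assms by (auto simp: standard_closure_def down_def)
  moreover have "G {p} \<subseteq> G S" using co_mono[OF std_co[OF assms]] \<open>p \<in> S\<close> by auto
  ultimately show "q \<in> G S" by auto
qed

lemma dcl_closed: "dset S \<Longrightarrow> S \<in> closed_sets dcl"
  by (auto simp: closed_sets_def dcl_def dset_def)

theorem proposition2p6:
  fixes \<Gamma> \<Gamma>' :: "'a::order set \<Rightarrow> 'a set"
  assumes "standard_closure \<Gamma>" and "standard_closure \<Gamma>'"
    and "\<forall>S. \<Gamma>' S \<subseteq> \<Gamma> S"
  shows "(\<exists>\<phi>. complete_join_hom (closed_sets \<Gamma>') (closed_sets \<Gamma>) \<phi>
              \<and> (\<forall>p. \<phi> (down p) = down p)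
              \<and> (\<forall>\<psi>. complete_join_hom (closed_sets \<Gamma>') (closed_sets \<Gamma>) \<psi>
                      \<and> (\<forall>p. \<psi> (down p) = down p)
                      \<longrightarrow> (\<forall>S\<in>closed_sets \<Gamma>'. \<psi> S = \<phi> S)))
       \<and> (is_frame (closed_sets \<Gamma>) \<longleftrightarrow>
           (\<forall>\<Gamma>''. standard_closure \<Gamma>'' \<and> (\<forall>S. \<Gamma>'' S \<subseteq> \<Gamma> S) \<longrightarrow>
              (\<forall>\<phi>. complete_join_hom (closed_sets \<Gamma>'') (closed_sets \<Gamma>) \<phi>
                    \<and> (\<forall>p. \<phi> (down p) = down p)
                    \<longrightarrow> finite_meet_preserving (closed_sets \<Gamma>'') (closed_sets \<Gamma>) \<phi>)))"
proof (intro conjI iffI allI impI)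
  have co: "closure_operator \<Gamma>" "closure_operator \<Gamma>'" using assms std_co by auto
  show "\<exists>\<phi>. complete_join_hom (closed_sets \<Gamma>') (closed_sets \<Gamma>) \<phi>
              \<and> (\<forall>p. \<phi> (down p) = down p)
              \<and> (\<forall>\<psi>. complete_join_hom (closed_sets \<Gamma>') (closed_sets \<Gamma>) \<psi>
                      \<and> (\<forall>p. \<psi> (down p) = down p)
                      \<longrightarrow> (\<forall>S\<in>closed_sets \<Gamma>'. \<psi> S = \<phi> S))"
    apply (rule exI[of _ \<Gamma>])
    using join_hom_G[OF co assms(3)] G_down[OF assms(1)] unique_hom[OF assms(1,2)] by blast
next
  fix \<Gamma>'' :: "'a set \<Rightarrow> 'a set" and \<phi>
  assume fr: "is_frame (closed_sets \<Gamma>)"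
    and h1: "standard_closure \<Gamma>'' \<and> (\<forall>S. \<Gamma>'' S \<subseteq> \<Gamma> S)"
    and h2: "complete_join_hom (closed_sets \<Gamma>'') (closed_sets \<Gamma>) \<phi> \<and> (\<forall>p. \<phi> (down p) = down p)"
  have co: "closure_operator \<Gamma>" "closure_operator \<Gamma>''" using assms h1 std_co by auto
  have phi: "\<And>S. S \<in> closed_sets \<Gamma>'' \<Longrightarrow> \<phi> S = \<Gamma> S"
    using unique_hom[OF assms(1)] h1 h2 by blast
  show "finite_meet_preserving (closed_sets \<Gamma>'') (closed_sets \<Gamma>) \<phi>"
    unfolding finite_meet_preserving_def
  proof (intro allI impI)
    fix Y x assume Y: "Y \<subseteq> closed_sets \<Gamma>''" "finite Y" and g: "is_glb (closed_sets \<Gamma>'') Y x"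
    have x: "x = \<Inter>Y" using glb_iff[OF co(2) Y(1)] g by auto
    have xc: "x \<in> closed_sets \<Gamma>''" using closed_Inter[OF co(2) Y(1)] x by simp
    have "\<phi> ` Y = \<Gamma> ` Y" using phi Y(1) by (auto simp: image_iff subset_iff)
    moreover have "\<phi> x = \<Inter>(\<Gamma> ` Y)"
      using phi[OF xc] x frame_Inter[OF assms(1) fr Y(2)] closed_dset h1 Y(1) by blast
    moreover have "\<Gamma> ` Y \<subseteq> closed_sets \<Gamma>" using closed_G[OF co(1)] by auto
    ultimately show "is_glb (closed_sets \<Gamma>) (\<phi> ` Y) (\<phi> x)"
      using glb_iff[OF co(1)] by auto
  qed
next
  assume H: "\<forall>\<Gamma>''. standard_closure \<Gamma>'' \<and> (\<forall>S. \<Gamma>'' S \<subseteq> \<Gamma> S) \<longrightarrow>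
              (\<forall>\<phi>. complete_join_hom (closed_sets \<Gamma>'') (closed_sets \<Gamma>) \<phi>
                    \<and> (\<forall>p. \<phi> (down p) = down p)
                    \<longrightarrow> finite_meet_preserving (closed_sets \<Gamma>'') (closed_sets \<Gamma>) \<phi>)"
  have co: "closure_operator \<Gamma>" using assms std_co by auto
  have fmp: "finite_meet_preserving (closed_sets dcl) (closed_sets \<Gamma>) \<Gamma>"
    using H dcl_std dcl_le[OF assms(1)] join_hom_G[OF co std_co[OF dcl_std]] G_down[OF assms(1)]
    by blast
  have meet: "\<Gamma> (A \<inter> B) = \<Gamma> A \<inter> \<Gamma> B" if "dset A" "dset B" for A B
  proof -
    have AB: "{A, B} \<subseteq> closed_sets dcl" using that dcl_closed by auto
    have "is_glb (closed_sets dcl) {A, B} (A \<inter> B)"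
      using glb_iff[OF std_co[OF dcl_std] AB] by auto
    then have "is_glb (closed_sets \<Gamma>) (\<Gamma> ` {A, B}) (\<Gamma> (A \<inter> B))"
      using fmp AB unfolding finite_meet_preserving_def by blast
    moreover have "\<Gamma> ` {A, B} \<subseteq> closed_sets \<Gamma>" using closed_G[OF co] by auto
    ultimately show ?thesis using glb_iff[OF co] by auto
  qed
  show "is_frame (closed_sets \<Gamma>)"
    unfolding is_frame_def
  proof (intro conjI allI impI ballI)
    fix Y :: "'a set set" assume "Y \<subseteq> closed_sets \<Gamma>"
    then show "\<exists>x. is_glb (closed_sets \<Gamma>) Y x" using glb_iff[OF co] by auto
  next
    fix Y :: "'a set set"
    show "\<exists>x. is_lub (closed_sets \<Gamma>) Y x" using lub_iff[OF co] by auto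
  next
    fix x Y assume x: "x \<in> closed_sets \<Gamma>" and Y: "Y \<subseteq> closed_sets \<Gamma>"
    have dx: "dset x" using closed_dset[OF assms(1) x] .
    have dU: "dset (\<Union>Y)" using closed_dset[OF assms(1)] Y by (auto simp: dset_def)
    have "glb (closed_sets \<Gamma>) {x, lub (closed_sets \<Gamma>) Y} = x \<inter> \<Gamma> (\<Union>Y)"
      using glb_eq[OF co] lub_eq[OF co] closed_G[OF co] x by auto
    also have "\<dots> = \<Gamma> x \<inter> \<Gamma> (\<Union>Y)" using x by (simp add: closed_sets_def)
    also have "\<dots> = \<Gamma> (x \<inter> \<Union>Y)" by (rule meet[OF dx dU, symmetric])
    also have "\<dots> = \<Gamma> (\<Union>y\<in>Y. x \<inter> y)" by (simp only: Int_Union)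
    also have "\<dots> = lub (closed_sets \<Gamma>) ((\<lambda>y. glb (closed_sets \<Gamma>) {x, y}) ` Y)"
    proof -
      have "\<And>y. y \<in> Y \<Longrightarrow> glb (closed_sets \<Gamma>) {x, y} = x \<inter> y"
        using glb_eq[OF co] x Y by auto
      then have "(\<lambda>y. glb (closed_sets \<Gamma>) {x, y}) ` Y = (\<lambda>y. x \<inter> y) ` Y" by auto
      then show ?thesis using lub_eq[OF co] by simp
    qed
    finally show "glb (closed_sets \<Gamma>) {x, lub (closed_sets \<Gamma>) Y} =
        lub (closed_sets \<Gamma>) ((\<lambda>y. glb (closed_sets \<Gamma>) {x, y}) ` Y)" .
  qed
qed

end
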